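(* Let $\alpha>0$, $\beta,\eta,\kappa\in\mathbb{R}$, $\rho>0$, $p\geq 1$, and $0\le a<x$. Let $f,g$ be two positive functions on $[0,\infty)$ with $f,g\in X^{p}_{c}(a,x)$ (for some $c\in\mathbb{R}$), such that ${}^{\rho}\mathcal{I}^{\alpha,\beta}_{a+,\eta,\kappa}f^{p}(x)<\infty$ and ${}^{\rho}\mathcal{I}^{\alpha,\beta}_{a+,\eta,\kappa}g^{p}(x)<\infty$. If there are real numbers $m,M>0$ with $0<m\leq \frac{f(t)}{g(t)}\leq M$ for all $t\in[a,x]$, then $$\left({}^{\rho}\mathcal{I}^{\alpha,\beta}_{a+,\eta,\kappa}f^{p}(x)\right)^{1/p}+\left({}^{\rho}\mathcal{I}^{\alpha,\beta}_{a+,\eta,\kappa}g^{p}(x)\right)^{1/p}\leq c_{1}\left({}^{\rho}\mathcal{I}^{\alpha,\beta}_{a+,\eta,\kappa}(f+g)^{p}(x)\right)^{1/p},$$ where $c_{1}=\frac{M(m+1)+(M+1)}{(m+1)(M+1)}$.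
   Context: For $c\in\mathbb{R}$ and $1\le p<\infty$, $X^{p}_{c}(a,b)$ denotes the space of Lebesgue measurable functions $f$ on $(a,b)$ with $\left(\int_a^b |t^{c}f(t)|^{p}\,\frac{dt}{t}\right)^{1/p}<\infty$. For $\alpha>0$, $\beta,\eta,\kappa\in\mathbb{R}$, $\rho>0$, $0\le a<x$, and a function $\varphi$, the generalized (Katugampola) fractional integral is $${}^{\rho}\mathcal{I}^{\alpha,\beta}_{a+,\eta,\kappa}\varphi(x)=\frac{\rho^{1-\beta}x^{\kappa}}{\Gamma(\alpha)}\int_{a}^{x}\frac{\tau^{\rho(\eta+1)-1}}{(x^{\rho}-\tau^{\rho})^{1-\alpha}}\varphi(\tau)\,d\tau,$$ whenever the integral exists. Notation such as ${}^{\rho}\mathcal{I}^{\alpha,\beta}_{a+,\eta,\kappa}f^{p}(x)$ or ${}^{\rho}\mathcal{I}^{\alpha,\beta}_{a+,\eta,\kappa}(f+g)^{p}(x)$ means the operator applied to the function $\tau\mapsto f(\tau)^p$, resp. $\tau\mapsto (f(\tau)+g(\tau))^p$, evaluated at $x$. *)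

theory Defs
  imports "HOL-Analysis.Analysis"
begin

definition X_space :: "real \<Rightarrow> real \<Rightarrow> real \<Rightarrow> real \<Rightarrow> (real \<Rightarrow> real) \<Rightarrow> bool" where
  "X_space c p a b f \<longleftrightarrow>
     f \<in> borel_measurable (restrict_space lebesgue {a<..<b}) \<and>
     set_integrable lebesgue {a<..<b} (\<lambda>t. \<bar>t powr c * f t\<bar> powr p / t)"

definition katu_kernel :: "real \<Rightarrow> real \<Rightarrow> real \<Rightarrow> real \<Rightarrow> (real \<Rightarrow> real) \<Rightarrow> real \<Rightarrow> real" where
  "katu_kernel \<alpha> \<rho> \<eta> x \<phi> \<tau> =
     \<tau> powr (\<rho> * (\<eta> + 1) - 1) / (x powr \<rho> - \<tau> powr \<rho>) powr (1 - \<alpha>) * \<phi> \<tau>"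

definition katugampola_int ::
  "real \<Rightarrow> real \<Rightarrow> real \<Rightarrow> real \<Rightarrow> real \<Rightarrow> real \<Rightarrow> (real \<Rightarrow> real) \<Rightarrow> real \<Rightarrow> real" where
  "katugampola_int \<rho> \<alpha> \<beta> a \<eta> \<kappa> \<phi> x =
     \<rho> powr (1 - \<beta>) * x powr \<kappa> / Gamma \<alpha> *
     (\<integral>\<tau>\<in>{a<..<x}. katu_kernel \<alpha> \<rho> \<eta> x \<phi> \<tau> \<partial>lebesgue)"

end

theory Submission
  imports Defs
begin

lemma kern_meas:
  fixes f g :: "real \<Rightarrow> real"
  assumes [measurable]: "f \<in> borel_measurable (restrict_space lebesgue {a<..<x})"
      "g \<in> borel_measurable (restrict_space lebesgue {a<..<x})"
  shows "set_borel_measurable lebesgue {a<..<x} (katu_kernel \<alpha> \<rho> \<eta> x (\<lambda>t. (f t + g t) powr p))"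
proof -
  have [measurable]: "(\<lambda>t::real. t) \<in> borel_measurable (restrict_space lebesgue {a<..<x})"
    by (rule measurable_restrict_space1, rule measurable_completion) simp
  have "katu_kernel \<alpha> \<rho> \<eta> x (\<lambda>t. (f t + g t) powr p) \<in> borel_measurable (restrict_space lebesgue {a<..<x})"
    unfolding katu_kernel_def by measurable
  then show ?thesis unfolding set_borel_measurable_def
    by (subst (asm) borel_measurable_restrict_space_iff) auto
qed

lemma key:
  fixes f g h :: "real \<Rightarrow> real"
  assumes p: "p \<ge> 1" and al: "\<alpha> > 0"
    and mf: "f \<in> borel_measurable (restrict_space lebesgue {a<..<x})"
    and mg: "g \<in> borel_measurable (restrict_space lebesgue {a<..<x})"
    and pos: "\<And>t. t \<in> {a<..<x} \<Longrightarrow> f t > 0 \<and> g t > 0 \<and> h t > 0"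
    and ih: "set_integrable lebesgue {a<..<x} (katu_kernel \<alpha> \<rho> \<eta> x (\<lambda>t. h t powr p))"
    and A: "A > 0" and B: "B > 0"
    and up: "\<And>t. t \<in> {a<..<x} \<Longrightarrow> h t \<le> A * (f t + g t)"
    and lo: "\<And>t. t \<in> {a<..<x} \<Longrightarrow> B * (f t + g t) \<le> h t"
  shows "katugampola_int \<rho> \<alpha> \<beta> a \<eta> \<kappa> (\<lambda>t. h t powr p) x powr (1/p)
     \<le> A * katugampola_int \<rho> \<alpha> \<beta> a \<eta> \<kappa> (\<lambda>t. (f t + g t) powr p) x powr (1/p)"
proof -
  define k where "k t = t powr (\<rho> * (\<eta> + 1) - 1) / (x powr \<rho> - t powr \<rho>) powr (1 - \<alpha>)" for t
  have kk: "katu_kernel \<alpha> \<rho> \<eta> x \<phi> = (\<lambda>t. k t * \<phi> t)" for \<phi>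
    by (auto simp: katu_kernel_def k_def)
  have k0: "k t \<ge> 0" for t by (simp add: k_def)
  have ptw: "(f t + g t) powr p \<le> (1/B) powr p * h t powr p" if "t \<in> {a<..<x}" for t
  proof -
    have "f t + g t \<le> (1/B) * h t" using lo[OF that] B by (simp add: field_simps)
    hence "(f t + g t) powr p \<le> ((1/B) * h t) powr p"
      using pos[OF that] p by (intro powr_mono2) auto
    also have "\<dots> = (1/B) powr p * h t powr p" using B pos[OF that] by (subst powr_mult) auto
    finally show ?thesis .
  qed
  have ptw2: "h t powr p \<le> A powr p * (f t + g t) powr p" if "t \<in> {a<..<x}" for t
  proof -
    have "h t powr p \<le> (A * (f t + g t)) powr p"
      using pos[OF that] p up[OF that] by (intro powr_mono2) auto
    also have "\<dots> = A powr p * (f t + g t) powr p" using A pos[OF that] by (simp add: powr_mult)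
    finally show ?thesis .
  qed
  have ifg: "set_integrable lebesgue {a<..<x} (katu_kernel \<alpha> \<rho> \<eta> x (\<lambda>t. (f t + g t) powr p))"
  proof (rule set_integrable_bound[where f="\<lambda>t. (1/B) powr p * katu_kernel \<alpha> \<rho> \<eta> x (\<lambda>t. h t powr p) t"])
    show "set_integrable lebesgue {a<..<x} (\<lambda>t. (1/B) powr p * katu_kernel \<alpha> \<rho> \<eta> x (\<lambda>t. h t powr p) t)"
      using ih by simp
    show "set_borel_measurable lebesgue {a<..<x} (katu_kernel \<alpha> \<rho> \<eta> x (\<lambda>t. (f t + g t) powr p))"
      by (rule kern_meas[OF mf mg])
    show "AE t in lebesgue. t \<in> {a<..<x} \<longrightarrow> norm (katu_kernel \<alpha> \<rho> \<eta> x (\<lambda>t. (f t + g t) powr p) t)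
        \<le> norm ((1/B) powr p * katu_kernel \<alpha> \<rho> \<eta> x (\<lambda>t. h t powr p) t)"
    proof (rule AE_I2, rule impI)
      fix t assume t: "t \<in> {a<..<x}"
      have "k t * (f t + g t) powr p \<le> k t * ((1/B) powr p * h t powr p)"
        using ptw[OF t] k0 by (intro mult_left_mono) auto
      thus "norm (katu_kernel \<alpha> \<rho> \<eta> x (\<lambda>t. (f t + g t) powr p) t)
        \<le> norm ((1/B) powr p * katu_kernel \<alpha> \<rho> \<eta> x (\<lambda>t. h t powr p) t)"
        using k0[of t] by (simp add: kk abs_mult mult_ac)
    qed
  qed
  have I: "(\<integral>t\<in>{a<..<x}. katu_kernel \<alpha> \<rho> \<eta> x (\<lambda>t. h t powr p) t \<partial>lebesgue)
      \<le> (\<integral>t\<in>{a<..<x}. A powr p * katu_kernel \<alpha> \<rho> \<eta> x (\<lambda>t. (f t + g t) powr p) t \<partial>lebesgue)"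
  proof (rule set_integral_mono[OF ih])
    show "set_integrable lebesgue {a<..<x} (\<lambda>t. A powr p * katu_kernel \<alpha> \<rho> \<eta> x (\<lambda>t. (f t + g t) powr p) t)"
      using ifg by simp
    fix t assume t: "t \<in> {a<..<x}"
    have "k t * h t powr p \<le> k t * (A powr p * (f t + g t) powr p)"
      using ptw2[OF t] k0 by (intro mult_left_mono) auto
    thus "katu_kernel \<alpha> \<rho> \<eta> x (\<lambda>t. h t powr p) t \<le> A powr p * katu_kernel \<alpha> \<rho> \<eta> x (\<lambda>t. (f t + g t) powr p) t"
      by (simp add: kk mult_ac)
  qed
  define C where "C = \<rho> powr (1 - \<beta>) * x powr \<kappa> / Gamma \<alpha>"
  have C0: "C \<ge> 0" unfolding C_def using al by (simp add: Gamma_real_pos less_imp_le)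
  have J0: "(\<integral>t\<in>{a<..<x}. katu_kernel \<alpha> \<rho> \<eta> x (\<lambda>t. h t powr p) t \<partial>lebesgue) \<ge> 0"
    unfolding set_lebesgue_integral_def by (rule Bochner_Integration.integral_nonneg) (simp add: kk k0)
  have K0: "(\<integral>t\<in>{a<..<x}. katu_kernel \<alpha> \<rho> \<eta> x (\<lambda>t. (f t + g t) powr p) t \<partial>lebesgue) \<ge> 0"
    unfolding set_lebesgue_integral_def by (rule Bochner_Integration.integral_nonneg) (simp add: kk k0)
  define J where "J = katugampola_int \<rho> \<alpha> \<beta> a \<eta> \<kappa> (\<lambda>t. h t powr p) x"
  define K where "K = katugampola_int \<rho> \<alpha> \<beta> a \<eta> \<kappa> (\<lambda>t. (f t + g t) powr p) x"
  have JK: "J \<le> A powr p * K" and Jn: "J \<ge> 0" and Kn: "K \<ge> 0"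
    unfolding J_def K_def katugampola_int_def C_def[symmetric]
    using mult_left_mono[OF I C0] C0 J0 K0 by (auto simp: mult_ac)
  have "J powr (1/p) \<le> (A powr p * K) powr (1/p)"
    using JK Jn p by (intro powr_mono2) auto
  also have "\<dots> = A * K powr (1/p)"
    using A Kn p by (simp add: powr_mult powr_powr)
  finally show ?thesis unfolding J_def K_def .
qed

theorem theorem8:
  fixes \<alpha> \<beta> \<eta> \<kappa> \<rho> p a x c m M :: real and f g :: "real \<Rightarrow> real"
  assumes "\<alpha> > 0" "\<rho> > 0" "p \<ge> 1" "0 \<le> a" "a < x"
    and fpos: "\<And>t. t \<ge> 0 \<Longrightarrow> f t > 0"
    and gpos: "\<And>t. t \<ge> 0 \<Longrightarrow> g t > 0"
    and "X_space c p a x f" "X_space c p a x g"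
    and "set_integrable lebesgue {a<..<x} (katu_kernel \<alpha> \<rho> \<eta> x (\<lambda>t. f t powr p))"
    and "set_integrable lebesgue {a<..<x} (katu_kernel \<alpha> \<rho> \<eta> x (\<lambda>t. g t powr p))"
    and "m > 0" "M > 0"
    and "\<And>t. t \<in> {a..x} \<Longrightarrow> m \<le> f t / g t \<and> f t / g t \<le> M"
  shows "katugampola_int \<rho> \<alpha> \<beta> a \<eta> \<kappa> (\<lambda>t. f t powr p) x powr (1/p)
       + katugampola_int \<rho> \<alpha> \<beta> a \<eta> \<kappa> (\<lambda>t. g t powr p) x powr (1/p)
       \<le> (M * (m + 1) + (M + 1)) / ((m + 1) * (M + 1))
         * katugampola_int \<rho> \<alpha> \<beta> a \<eta> \<kappa> (\<lambda>t. (f t + g t) powr p) x powr (1/p)"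
proof -
  note X = assms(8,9)[unfolded X_space_def]
  have mf: "f \<in> borel_measurable (restrict_space lebesgue {a<..<x})" using X by blast
  have mg: "g \<in> borel_measurable (restrict_space lebesgue {a<..<x})" using X by blast
  have pos: "\<And>t. t \<in> {a<..<x} \<Longrightarrow> f t > 0 \<and> g t > 0" using fpos gpos assms(4) by force
  have lm: "m * g t \<le> f t" and uM: "f t \<le> M * g t" if t: "t \<in> {a<..<x}" for t
  proof -
    have r: "m \<le> f t / g t" "f t / g t \<le> M" using assms(14)[of t] t by auto
    show "m * g t \<le> f t" using r(1) pos[OF t] by (simp add: field_simps)
    show "f t \<le> M * g t" using r(2) pos[OF t] by (simp add: field_simps)
  qed
  have 1: "katugampola_int \<rho> \<alpha> \<beta> a \<eta> \<kappa> (\<lambda>t. f t powr p) x powr (1/p)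
     \<le> (M/(M+1)) * katugampola_int \<rho> \<alpha> \<beta> a \<eta> \<kappa> (\<lambda>t. (f t + g t) powr p) x powr (1/p)"
  proof (rule key[OF assms(3,1) mf mg _ assms(10), where B="m/(m+1)"])
    show "\<And>t. t \<in> {a<..<x} \<Longrightarrow> f t > 0 \<and> g t > 0 \<and> f t > 0" using pos by auto
    show "M/(M+1) > 0" "m/(m+1) > 0" using assms(12,13) by auto
    fix t assume t: "t \<in> {a<..<x}"
    show "f t \<le> M/(M+1) * (f t + g t)" using uM[OF t] assms(13) by (simp add: field_simps)
    show "m/(m+1) * (f t + g t) \<le> f t" using lm[OF t] assms(12) by (simp add: field_simps)
  qed
  have 2: "katugampola_int \<rho> \<alpha> \<beta> a \<eta> \<kappa> (\<lambda>t. g t powr p) x powr (1/p)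
     \<le> (1/(m+1)) * katugampola_int \<rho> \<alpha> \<beta> a \<eta> \<kappa> (\<lambda>t. (f t + g t) powr p) x powr (1/p)"
  proof (rule key[OF assms(3,1) mf mg _ assms(11), where B="1/(M+1)"])
    show "\<And>t. t \<in> {a<..<x} \<Longrightarrow> f t > 0 \<and> g t > 0 \<and> g t > 0" using pos by auto
    show "1/(m+1) > 0" "1/(M+1) > 0" using assms(12,13) by auto
    fix t assume t: "t \<in> {a<..<x}"
    show "g t \<le> 1/(m+1) * (f t + g t)" using lm[OF t] assms(12) by (simp add: field_simps)
    show "1/(M+1) * (f t + g t) \<le> g t" using uM[OF t] assms(13) by (simp add: field_simps)
  qed
  have c: "(M * (m + 1) + (M + 1)) / ((m + 1) * (M + 1)) = M/(M+1) + 1/(m+1)"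
    using assms(12,13) by (simp add: field_simps)
  show ?thesis using add_mono[OF 1 2] unfolding c by (simp add: distrib_right)
qed

end
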